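(* Let $d\ge1$ and let $B$ be a centered, isotropic, jointly measurable Gaussian field on $S^d$ with continuous covariance function $\kappa:[-1,1]\to\mathbb R$, $\mathbb E[B_xB_y]=\kappa(\langle x,y\rangle)$, $\kappa(1)=1$. Suppose there exist $C_1,\alpha,\epsilon>0$ such that $|\kappa(t)|<1$ for all $t\ne1$ and $1-\kappa(\cos\theta)\ge C_1|\theta|^\alpha$ for $|\theta|\le\epsilon$. Let $\mu$ be the volume measure on $S^d$ and $\varphi\in L^2(\mathbb R,\phi(x)dx)$. If $p\in\mathbb N$ satisfies $p\le d/\alpha$, then $Y(\varphi)=\int_{S^d}\varphi(B_x)\mu(dx)\in\mathbb D^{p,2}$.
   Context: Hermite polynomials: $H_0=1$, $H_1(x)=x$, $H_{q+1}(x)=xH_q(x)-qH_{q-1}(x)$; $\phi(x)=e^{-x^2/2}/\sqrt{2\pi}$. For $\varphi\in L^2(\mathbb R,\phi(x)dx)$, $a_q(\varphi)=\frac1{q!}\int_{\mathbb R}H_q\varphi\phi\,dx$, and $Y(\varphi)\in\mathbb D^{p,2}$ iff $\sum_{q\ge0}q^p\,q!\,a_q(\varphi)^2\int_{(S^d)^2}\kappa(\langle x,y\rangle)^q\,\mu(dx)\mu(dy)<\infty$. Isotropic means the law of $B$ is invariant under rotations. *)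

theory Defs
  imports "HOL-Probability.Probability"
begin

fun hermite :: "nat \<Rightarrow> real \<Rightarrow> real" where
  "hermite 0 x = 1"
| "hermite (Suc 0) x = x"
| "hermite (Suc (Suc q)) x = x * hermite (Suc q) x - real (Suc q) * hermite q x"

definition hermite_coeff :: "(real \<Rightarrow> real) \<Rightarrow> nat \<Rightarrow> real" where
  "hermite_coeff f q = (1 / fact q) * (LINT x|lborel. hermite q x * f x * std_normal_density x)"

definition L2_gauss :: "(real \<Rightarrow> real) \<Rightarrow> bool" where
  "L2_gauss f \<longleftrightarrow> f \<in> borel_measurable borel \<and>
     integrable lborel (\<lambda>x. (f x)\<^sup>2 * std_normal_density x)"

text \<open>The unit sphere S^d in R^(d+1), as a measurable space with its Borel sets.\<close>
definition sphere_space :: "('n::finite) itself \<Rightarrow> (real^'n) measure" where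
  "sphere_space _ = restrict_space borel (sphere (0::real^'n) 1)"

text \<open>Volume (surface) measure on the unit sphere: sigma(A) = (d+1) * Leb(cone over A
  inside the unit ball), i.e. (d+1) times the push-forward of Lebesgue measure on the
  punctured unit ball under x \<mapsto> x / |x|.\<close>
definition sphere_measure :: "('n::finite) itself \<Rightarrow> (real^'n) measure" where
  "sphere_measure T = scale_measure (ennreal (real CARD('n)))
     (distr (restrict_space lborel (ball (0::real^'n) 1 - {0})) (sphere_space T)
        (\<lambda>x. x /\<^sub>R norm x))"

text \<open>Joint Gaussianity:
  every finite linear combination is a centered Gaussian variable with the variance
  prescribed by the covariance (expressed via its characteristic function, which also
  covers degenerate combinations).\<close>
definition gaussian_field ::
  "'w measure \<Rightarrow> (real^'n::finite \<Rightarrow> 'w \<Rightarrow> real) \<Rightarrow> (real \<Rightarrow> real) \<Rightarrow> bool" where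
  "gaussian_field M B \<kappa> \<longleftrightarrow>
     prob_space M \<and>
     (\<lambda>(x, w). B x w) \<in> borel_measurable (sphere_space TYPE('n) \<Otimes>\<^sub>M M) \<and>
     (\<forall>x\<in>sphere 0 1. integrable M (B x) \<and> (LINT w|M. B x w) = 0) \<and>
     (\<forall>x\<in>sphere 0 1. \<forall>y\<in>sphere 0 1.
        integrable M (\<lambda>w. B x w * B y w) \<and> (LINT w|M. B x w * B y w) = \<kappa> (x \<bullet> y)) \<and>
     (\<forall>xs cs. set xs \<subseteq> sphere 0 1 \<longrightarrow> length cs = length xs \<longrightarrow>
        (\<forall>t::real. (LINT w|M. iexp (t * (\<Sum>i<length xs. cs ! i * B (xs ! i) w))) =
           complex_of_real (exp (- (t\<^sup>2 *
              (\<Sum>i<length xs. \<Sum>j<length xs. cs ! i * cs ! j * \<kappa> (xs ! i \<bullet> xs ! j))) / 2))))"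

text \<open>Isotropy: the law of B is invariant under rotations (orthogonal maps of R^(d+1)):
  for every orthogonal R, the finite-dimensional laws of (B_{Rx}) and (B_x) agree,
  expressed through the joint characteristic functions.\<close>
definition isotropic_field :: "'w measure \<Rightarrow> (real^'n::finite \<Rightarrow> 'w \<Rightarrow> real) \<Rightarrow> bool" where
  "isotropic_field M B \<longleftrightarrow>
     (\<forall>R::real^'n \<Rightarrow> real^'n. orthogonal_transformation R \<longrightarrow>
        (\<forall>xs cs. set xs \<subseteq> sphere 0 1 \<longrightarrow> length cs = length xs \<longrightarrow>
           (LINT w|M. iexp (\<Sum>i<length xs. cs ! i * B (R (xs ! i)) w)) =
           (LINT w|M. iexp (\<Sum>i<length xs. cs ! i * B (xs ! i) w))))"

text \<open>Membership Y(f) = int_{S^d} f(B_x) mu(dx) in D^{p,2}, via the criterion of the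
  paper's context: sum_q q^p q! a_q(f)^2 int int kappa(<x,y>)^q mu(dx) mu(dy) < infinity.\<close>
definition in_D_p2 ::
  "(real^'n::finite) measure \<Rightarrow> (real \<Rightarrow> real) \<Rightarrow> (real \<Rightarrow> real) \<Rightarrow> nat \<Rightarrow> bool" where
  "in_D_p2 \<mu> \<kappa> f p \<longleftrightarrow>
     summable (\<lambda>q. real q ^ p * fact q * (hermite_coeff f q)\<^sup>2 *
        (LINT x|\<mu>. LINT y|\<mu>. (\<kappa> (x \<bullet> y)) ^ q))"

end

theory Submission
  imports Defs "HOL-Computational_Algebra.Polynomial"
begin


definition xp :: "real poly" where "xp = [:0,1:]"

lemma poly_xp[simp]: "poly xp x = x" by (simp add: xp_def)
lemma pderiv_xp[simp]: "pderiv xp = 1" by (simp add: xp_def pderiv_pCons)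

fun hp :: "nat \<Rightarrow> real poly" where
  "hp 0 = 1"
| "hp (Suc 0) = xp"
| "hp (Suc (Suc q)) = xp * hp (Suc q) - smult (real (Suc q)) (hp q)"

lemma poly_hp: "poly (hp q) x = hermite q x"
  by (induction q rule: hp.induct) (auto simp: algebra_simps)

lemma hp_deriv: "pderiv (hp (Suc q)) = smult (of_nat (Suc q)) (hp q)"
proof (induction q rule: less_induct)
  case (less q)
  show ?case
  proof (cases q)
    case 0
    then show ?thesis by (simp add: pderiv_pCons)
  next
    case (Suc q')
    have aux: "xp * hp q' - pderiv (hp q') = hp (Suc q')"
    proof (cases q')
      case 0 then show ?thesis by simp
    next
      case (Suc q'')
      have "pderiv (hp (Suc q'')) = smult (of_nat (Suc q'')) (hp q'')"
        using less Suc \<open>q = Suc q'\<close> by simp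
      then show ?thesis using Suc by simp
    qed
    have ih: "pderiv (hp (Suc q')) = smult (of_nat (Suc q')) (hp q')"
      using less Suc by simp
    have "pderiv (hp (Suc q)) = hp (Suc q') + xp * smult (of_nat (Suc q')) (hp q')
         - smult (of_nat (Suc q')) (pderiv (hp q'))"
      using Suc ih by (simp add: pderiv_diff pderiv_mult pderiv_smult pderiv_pCons algebra_simps)
    also have "\<dots> = hp (Suc q') + smult (of_nat (Suc q')) (xp * hp q' - pderiv (hp q'))"
      by (simp add: smult_diff_right mult_smult_right)
    also have "\<dots> = hp (Suc q') + smult (of_nat (Suc q')) (hp (Suc q'))"
      using aux by simp
    also have "\<dots> = smult (1 + of_nat (Suc q')) (hp (Suc q'))"
      by (simp only: smult_add_left smult_1_left)
    also have "\<dots> = smult (of_nat (Suc q)) (hp q)"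
      using Suc by (simp add: add.commute)
    finally show ?thesis .
  qed
qed

definition mom :: "nat \<Rightarrow> real" where
  "mom k = (LINT x|lborel. std_normal_density x * x ^ k)"

lemma mom_int: "integrable lborel (\<lambda>x. std_normal_density x * x ^ k)"
proof (cases "even k")
  case True
  then obtain j where "k = 2 * j" by blast
  then show ?thesis using std_normal_moment_even[of j] by (simp add: has_bochner_integral_iff)
next
  case False
  then obtain j where "k = 2 * j + 1" using oddE by blast
  then show ?thesis using std_normal_moment_odd[of j] by (simp add: has_bochner_integral_iff)
qed

lemma mom_1: "mom (Suc 0) = 0"
  using integral_std_normal_moment_odd[of 0] by (simp add: mom_def)

lemma mom_0: "mom 0 = 1"
  using integral_std_normal_moment_even[of 0] by (simp add: mom_def)

lemma mom_rec: "mom (Suc (Suc k)) = real (Suc k) * mom k"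
proof (cases "even k")
  case True
  then obtain j where j: "k = 2 * j" by blast
  have a: "mom (2 * j) = fact (2 * j) / (2^j * fact j)"
    unfolding mom_def by (rule integral_std_normal_moment_even)
  have b: "mom (2 * Suc j) = fact (2 * Suc j) / (2^Suc j * fact (Suc j))"
    unfolding mom_def by (rule integral_std_normal_moment_even)
  have e: "2 * Suc j = Suc (Suc (2 * j))" by simp
  have f1: "(fact (2 * Suc j) :: real) = real (Suc (Suc (2*j))) * (real (Suc (2*j)) * fact (2*j))"
    unfolding e by (simp only: fact_Suc of_nat_mult)
  have f2: "(fact (Suc j) :: real) = real (Suc j) * fact j" by (simp only: fact_Suc of_nat_mult)
  have f3: "(2::real)^Suc j = 2 * 2^j" by simp
  have "mom (Suc (Suc k)) = mom (2 * Suc j)" using j e by simp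
  also have "\<dots> = real (Suc (Suc (2*j))) * (real (Suc (2*j)) * fact (2*j)) / ((2 * 2^j) * (real (Suc j) * fact j))"
    using b f1 f2 f3 by simp
  also have "\<dots> = real (Suc (2*j)) * (fact (2*j) / (2^j * fact j))"
    by (simp add: divide_simps)
  also have "\<dots> = real (Suc k) * mom k" using a j by simp
  finally show ?thesis .
next
  case False
  then obtain j where j: "k = 2 * j + 1" using oddE by blast
  have a: "mom (2 * j + 1) = 0"
    unfolding mom_def by (rule integral_std_normal_moment_odd)
  have b: "mom (2 * Suc j + 1) = 0"
    unfolding mom_def by (rule integral_std_normal_moment_odd)
  have "Suc (Suc k) = 2 * Suc j + 1" using j by simp
  then show ?thesis using a b j by simp
qed

definition Lg :: "real poly \<Rightarrow> real" where
  "Lg g = (LINT x|lborel. std_normal_density x * poly g x)"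

lemma Lg_int: "integrable lborel (\<lambda>x. std_normal_density x * poly g x)"
proof -
  have eq: "(\<lambda>x. std_normal_density x * poly g x) =
        (\<lambda>x. \<Sum>i\<le>degree g. coeff g i * (std_normal_density x * x ^ i))"
    by (rule ext) (simp only: poly_altdef sum_distrib_left mult.left_commute)
  show ?thesis unfolding eq
    by (rule Bochner_Integration.integrable_sum, rule integrable_mult_right, rule mom_int)
qed

lemma Lg_add: "Lg (p + q) = Lg p + Lg q"
  unfolding Lg_def using Lg_int[of p] Lg_int[of q]
  by (simp add: distrib_left)

lemma Lg_diff: "Lg (p - q) = Lg p - Lg q"
  unfolding Lg_def using Lg_int[of p] Lg_int[of q]
  by (simp add: right_diff_distrib)

lemma Lg_smult: "Lg (smult c p) = c * Lg p"
  unfolding Lg_def by (simp add: algebra_simps)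

lemma Lg_0: "Lg 0 = 0" unfolding Lg_def by simp

lemma Lg_monom: "Lg (monom c i) = c * mom i"
  unfolding Lg_def mom_def by (simp add: poly_monom algebra_simps)

lemma ibp: "Lg (xp * g) = Lg (pderiv g)"
proof -
  define P where "P g \<longleftrightarrow> Lg (xp * g) = Lg (pderiv g)" for g
  have mon: "P (monom c i)" for c i
  proof -
    have "xp * monom c i = monom c (Suc i)"
      by (simp add: monom_Suc xp_def)
    moreover have "mom (Suc i) = real i * mom (i - 1)"
      by (cases i) (simp_all add: mom_1 mom_rec)
    ultimately show ?thesis
      by (simp add: P_def Lg_monom pderiv_monom)
  qed
  have add: "P a \<Longrightarrow> P b \<Longrightarrow> P (a + b)" for a b
    by (simp add: P_def distrib_left pderiv_add Lg_add)
  have "P (\<Sum>i\<le>n. monom (coeff g i) i)" for n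
    by (induction n) (simp_all add: mon add)
  then have "P g" using poly_as_sum_of_monoms[of g] by metis
  then show ?thesis by (simp add: P_def)
qed

lemma funpow_pderiv_smult: "(pderiv ^^ k) (smult c p) = smult c ((pderiv ^^ k) p)"
  by (induction k) (auto simp: pderiv_smult)

lemma hp_orth_aux: "Lg (hp q * g) = Lg ((pderiv ^^ q) g)"
proof (induction q arbitrary: g rule: less_induct)
  case (less q)
  show ?case
  proof (cases q)
    case 0 then show ?thesis by simp
  next
    case (Suc q')
    show ?thesis
    proof (cases q')
      case 0 then show ?thesis using Suc ibp by simp
    next
      case (Suc r)
      have "hp q * g = xp * (hp (Suc r) * g) - smult (real (Suc r)) (hp r * g)"
        using Suc \<open>q = Suc q'\<close> by (simp add: algebra_simps)
      then have "Lg (hp q * g) = Lg (pderiv (hp (Suc r) * g)) - real (Suc r) * Lg (hp r * g)"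
        by (simp add: Lg_diff Lg_smult ibp)
      also have "pderiv (hp (Suc r) * g) = hp (Suc r) * pderiv g + smult (real (Suc r)) (hp r * g)"
        by (simp add: pderiv_mult hp_deriv algebra_simps)
      finally have "Lg (hp q * g) = Lg (hp (Suc r) * pderiv g)"
        by (simp add: Lg_add Lg_smult)
      also have "\<dots> = Lg ((pderiv ^^ Suc r) (pderiv g))"
        using less Suc \<open>q = Suc q'\<close> by simp
      finally show ?thesis using Suc \<open>q = Suc q'\<close> by (simp add: funpow_Suc_right del: funpow.simps)
    qed
  qed
qed

lemma funpow_pderiv_hp: "(pderiv ^^ k) (hp (k + r)) = smult (fact (k + r) / fact r) (hp r)"
proof (induction k)
  case 0 then show ?case by simp
next
  case (Suc k)
  have "(pderiv ^^ Suc k) (hp (Suc k + r)) = (pderiv ^^ k) (pderiv (hp (Suc (k + r))))"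
    by (simp add: funpow_Suc_right del: funpow.simps)
  also have "\<dots> = smult (real (Suc (k + r))) ((pderiv ^^ k) (hp (k + r)))"
    by (simp add: hp_deriv funpow_pderiv_smult)
  also have "\<dots> = smult (fact (Suc k + r) / fact r) (hp r)"
    using Suc by (simp add: fact_Suc field_simps)
  finally show ?case .
qed

lemma funpow_pderiv_0: "(pderiv ^^ k) (0::real poly) = 0"
  by (induction k) auto

lemma hp_orth_lt: assumes "r < q" shows "Lg (hp q * hp r) = 0"
proof -
  obtain k where k: "q = Suc k + r" using assms by (metis add_Suc less_imp_Suc_add add.commute)
  have "(pderiv ^^ q) (hp r) = (pderiv ^^ Suc k) ((pderiv ^^ r) (hp r))"
    unfolding k funpow_add by simp
  also have "(pderiv ^^ r) (hp r) = smult (fact r) 1"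
    using funpow_pderiv_hp[of r 0] by simp
  also have "(pderiv ^^ Suc k) (smult (fact r) 1) = (pderiv ^^ k) 0"
    by (simp only: funpow_Suc_right o_apply pderiv_smult pderiv_1 smult_0_right)
  also have "\<dots> = 0" by (induction k) auto
  finally show ?thesis using hp_orth_aux[of q "hp r"] by (simp add: Lg_0)
qed

lemma hp_orth: "Lg (hp q * hp r) = (if q = r then fact q else 0)"
proof (cases "q = r")
  case True
  have "(pderiv ^^ q) (hp q) = smult (fact q) 1"
    using funpow_pderiv_hp[of q 0] by simp
  moreover have "Lg [:fact q:] = fact q" using mom_0 by (simp add: Lg_def mom_def)
  ultimately show ?thesis using True hp_orth_aux[of q "hp q"]
    by (simp add: Lg_smult)
next
  case False
  then show ?thesis using hp_orth_lt[of r q] hp_orth_lt[of q r]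
    by (cases "r < q") (auto simp: mult.commute)
qed



lemma hermite_poly: "hermite q = poly (hp q)"
  by (rule ext) (simp add: poly_hp)

lemma hermite_meas[measurable]: "hermite q \<in> borel_measurable borel"
  unfolding hermite_poly by (intro borel_measurable_continuous_onI continuous_intros)

lemma int_HH: "integrable lborel (\<lambda>x. std_normal_density x * (hermite q x * hermite r x))"
  using Lg_int[of "hp q * hp r"] by (simp add: poly_hp)

lemma LINT_HH: "(LINT x|lborel. std_normal_density x * (hermite q x * hermite r x)) = (if q = r then fact q else 0)"
  using hp_orth[of q r] by (simp add: Lg_def poly_hp)

lemma abs_mult_le_sq: "\<bar>a * b\<bar> \<le> a\<^sup>2 + (b::real)\<^sup>2"
proof -
  have "0 \<le> (\<bar>a\<bar> - \<bar>b\<bar>)\<^sup>2" by simp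
  then have "2 * (\<bar>a\<bar> * \<bar>b\<bar>) \<le> a\<^sup>2 + b\<^sup>2" by (simp add: power2_eq_square algebra_simps)
  moreover have "0 \<le> \<bar>a\<bar> * \<bar>b\<bar>" by simp
  ultimately show ?thesis unfolding abs_mult by linarith
qed

lemma int_fH:
  assumes "L2_gauss f"
  shows "integrable lborel (\<lambda>x. hermite q x * f x * std_normal_density x)"
proof -
  have fm[measurable]: "f \<in> borel_measurable borel" and fi: "integrable lborel (\<lambda>x. (f x)\<^sup>2 * std_normal_density x)"
    using assms by (auto simp: L2_gauss_def)
  have "integrable lborel (\<lambda>x. (f x)\<^sup>2 * std_normal_density x + std_normal_density x * (hermite q x * hermite q x))"
    using fi int_HH[of q q] by simp
  then show ?thesis
  proof (rule Bochner_Integration.integrable_bound)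
    show "(\<lambda>x. hermite q x * f x * std_normal_density x) \<in> borel_measurable lborel" by measurable
    show "AE x in lborel. norm (hermite q x * f x * std_normal_density x)
          \<le> norm ((f x)\<^sup>2 * std_normal_density x + std_normal_density x * (hermite q x * hermite q x))"
    proof (rule AE_I2)
      fix x
      have p: "0 \<le> std_normal_density x" by (simp add: normal_density_nonneg)
      have "\<bar>hermite q x * f x\<bar> \<le> (f x)\<^sup>2 + (hermite q x)\<^sup>2" using abs_mult_le_sq[of "hermite q x" "f x"] by simp
      then have "\<bar>hermite q x * f x\<bar> * std_normal_density x \<le> ((f x)\<^sup>2 + (hermite q x)\<^sup>2) * std_normal_density x"
        using p by (rule mult_right_mono)
      moreover have "0 \<le> ((f x)\<^sup>2 + (hermite q x)\<^sup>2) * std_normal_density x" using p by simp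
      ultimately show "norm (hermite q x * f x * std_normal_density x)
          \<le> norm ((f x)\<^sup>2 * std_normal_density x + std_normal_density x * (hermite q x * hermite q x))"
        using p by (simp add: abs_mult power2_eq_square algebra_simps)
    qed
  qed
qed

lemma bessel_partial:
  assumes f: "L2_gauss f"
  shows "(\<Sum>q<N. fact q * (hermite_coeff f q)\<^sup>2) \<le> (LINT x|lborel. (f x)\<^sup>2 * std_normal_density x)"
proof -
  let ?p = std_normal_density
  define c where "c = hermite_coeff f"
  have fi: "integrable lborel (\<lambda>x. (f x)\<^sup>2 * ?p x)" using f by (auto simp: L2_gauss_def)
  have cdef: "(LINT x|lborel. hermite q x * f x * ?p x) = fact q * c q" for q
    by (simp add: c_def hermite_coeff_def)
  define F where "F x = (\<Sum>q<N. c q * hermite q x)" for x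
  have eq: "(f x - F x)\<^sup>2 * ?p x = (f x)\<^sup>2 * ?p x - 2 * (\<Sum>q<N. c q * (hermite q x * f x * ?p x))
      + (\<Sum>q<N. \<Sum>r<N. c q * c r * (?p x * (hermite q x * hermite r x)))" for x
  proof -
    have a: "(f x - F x)\<^sup>2 * ?p x = (f x)\<^sup>2 * ?p x - 2 * (F x * f x * ?p x) + F x * F x * ?p x"
      by (simp add: power2_eq_square algebra_simps)
    have b: "F x * f x * ?p x = (\<Sum>q<N. c q * (hermite q x * f x * ?p x))"
      unfolding F_def by (simp add: sum_distrib_right mult.assoc)
    have c: "F x * F x * ?p x = (\<Sum>q<N. \<Sum>r<N. c q * c r * (?p x * (hermite q x * hermite r x)))"
      unfolding F_def sum_product by (simp add: sum_distrib_right sum_distrib_left mult_ac)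
    show ?thesis using a b c by simp
  qed
  have "0 \<le> (LINT x|lborel. (f x - F x)\<^sup>2 * ?p x)"
    by (rule integral_nonneg_AE) (simp add: normal_density_nonneg)
  also have "(LINT x|lborel. (f x - F x)\<^sup>2 * ?p x) =
      (LINT x|lborel. (f x)\<^sup>2 * ?p x) - 2 * (\<Sum>q<N. c q * (fact q * c q))
      + (\<Sum>q<N. \<Sum>r<N. c q * c r * (if q = r then fact q else 0))"
    unfolding eq using fi int_fH[OF f] int_HH
    by (simp add: cdef LINT_HH)
  also have "\<dots> = (LINT x|lborel. (f x)\<^sup>2 * ?p x) - (\<Sum>q<N. fact q * (c q)\<^sup>2)"
    by (simp add: if_distrib sum.delta power2_eq_square sum_distrib_left[symmetric] mult_ac cong: if_cong)
  finally show ?thesis by (simp add: c_def)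
qed

lemma bessel:
  assumes f: "L2_gauss f"
  shows "summable (\<lambda>q. fact q * (hermite_coeff f q)\<^sup>2)"
  by (rule summableI_nonneg_bounded[where x="LINT x|lborel. (f x)\<^sup>2 * std_normal_density x"])
     (auto intro: bessel_partial[OF f])



lemma normalize_meas:
  "(\<lambda>x::real^'n::finite. x /\<^sub>R norm x) \<in> measurable (restrict_space lborel (ball 0 1 - {0})) (sphere_space TYPE('n))"
  unfolding sphere_space_def
proof (rule measurable_restrict_space3)
  show "(\<lambda>x::real^'n. x /\<^sub>R norm x) \<in> measurable lborel borel" by measurable
  show "(\<lambda>x::real^'n. x /\<^sub>R norm x) \<in> ball 0 1 - {0} \<rightarrow> sphere 0 1" by auto
qed

lemma sphere_nn:
  fixes g :: "real^'n::finite \<Rightarrow> ennreal"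
  assumes g[measurable]: "g \<in> borel_measurable borel"
  shows "(\<integral>\<^sup>+y. g y \<partial>sphere_measure TYPE('n)) =
    ennreal (real CARD('n)) * (\<integral>\<^sup>+z. g (z /\<^sub>R norm z) * indicator (ball 0 1 - {0}) z \<partial>lborel)"
proof -
  let ?M = "restrict_space lborel (ball (0::real^'n) 1 - {0})"
  have gs: "g \<in> borel_measurable (sphere_space TYPE('n))"
    unfolding sphere_space_def by (rule measurable_restrict_space1) simp
  have gd: "g \<in> borel_measurable (distr ?M (sphere_space TYPE('n)) (\<lambda>x. x /\<^sub>R norm x))"
    using gs by (simp cong: measurable_cong_sets)
  have o: "(ball (0::real^'n) 1 - {0}) \<inter> space lborel \<in> sets lborel"
    by (simp add: borel_open open_Diff)
  show ?thesis
    unfolding sphere_measure_def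
    by (simp add: nn_integral_scale_measure[OF gd] nn_integral_distr[OF normalize_meas gd]
        nn_integral_restrict_space[OF o])
qed



lemma cyl_bound:
  fixes x :: "'a::euclidean_space" and r :: real
  assumes x: "norm x = 1" and r: "r > 0"
  shows "emeasure lborel {z. norm z < 1 \<and> norm (z - (z \<bullet> x) *\<^sub>R x) < r}
         \<le> ennreal ((2 / r + 3) * (4 * r) ^ DIM('a))"
proof -
  define N where "N = nat \<lceil>1 / r\<rceil>"
  define J where "J = {- int N .. int N}"
  define R :: 'a where "R = (2 * r) *\<^sub>R (\<Sum>Basis)"
  define B where "B j = cbox ((real_of_int j * r) *\<^sub>R x - R) ((real_of_int j * r) *\<^sub>R x + R)" for j :: int
  have RB: "R \<bullet> b = 2 * r" if "b \<in> Basis" for b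
    using that by (simp add: R_def)
  have sub: "{z. norm z < 1 \<and> norm (z - (z \<bullet> x) *\<^sub>R x) < r} \<subseteq> (\<Union>j\<in>J. B j)"
  proof
    fix z assume "z \<in> {z. norm z < 1 \<and> norm (z - (z \<bullet> x) *\<^sub>R x) < r}"
    then have z1: "norm z < 1" and z2: "norm (z - (z \<bullet> x) *\<^sub>R x) < r" by auto
    define t where "t = z \<bullet> x"
    have tb: "\<bar>t\<bar> < 1"
      using Cauchy_Schwarz_ineq2[of z x] x z1 by (simp add: t_def)
    define j where "j = \<lfloor>t / r\<rfloor>"
    have j1: "real_of_int j \<le> t / r" "t / r < real_of_int j + 1"
      unfolding j_def by linarith+
    have j1': "real_of_int j * r \<le> t" "t < (real_of_int j + 1) * r"
      using j1 r by (simp_all add: field_simps)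
    have c0: "0 \<le> \<lceil>1/r\<rceil>"
    proof -
      have "0 < 1/r" using r by simp
      then have "-1 < 1/r" by linarith
      then show ?thesis by (simp only: zero_le_ceiling)
    qed
    have N1: "1 / r \<le> real N"
    proof -
      have "1/r \<le> real_of_int \<lceil>1/r\<rceil>" by (rule le_of_int_ceiling)
      also have "real_of_int \<lceil>1/r\<rceil> = real N" unfolding N_def using c0 by simp
      finally show ?thesis .
    qed
    have "t / r < 1 / r" using tb r by (simp add: divide_strict_right_mono)
    then have jup: "j \<le> int N" using j1 N1 by linarith
    have "- 1 < t" using tb by linarith
    then have "- 1 / r < t / r" using r by (rule divide_strict_right_mono)
    moreover have "- 1 / r = - (1 / r)" by simp
    ultimately have "- real N - 1 < real_of_int j"
      using j1 N1 by linarith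
    then have jlo: "- int N \<le> j" by linarith
    have jJ: "j \<in> J" using jup jlo by (simp add: J_def)
    have d1: "t - real_of_int j * r < r" using j1'(2) by (simp add: distrib_right)
    have d2: "0 \<le> t - real_of_int j * r" using j1'(1) by simp
    have d: "norm ((t - real_of_int j * r) *\<^sub>R x) < r"
      using d1 d2 x by simp
    have "norm (z - (real_of_int j * r) *\<^sub>R x) = norm ((z - t *\<^sub>R x) + (t - real_of_int j * r) *\<^sub>R x)"
      by (simp add: algebra_simps)
    also have "\<dots> \<le> norm (z - t *\<^sub>R x) + norm ((t - real_of_int j * r) *\<^sub>R x)"
      by (rule norm_triangle_ineq)
    also have "\<dots> < 2 * r" using z2 d by (simp add: t_def)
    finally have dd: "norm (z - (real_of_int j * r) *\<^sub>R x) < 2 * r" .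
    have "z \<in> B j"
      unfolding B_def mem_box
    proof (intro ballI conjI)
      fix b :: 'a assume b: "b \<in> Basis"
      have "\<bar>(z - (real_of_int j * r) *\<^sub>R x) \<bullet> b\<bar> \<le> norm (z - (real_of_int j * r) *\<^sub>R x)"
        using b by (rule Basis_le_norm)
      then have "\<bar>(z - (real_of_int j * r) *\<^sub>R x) \<bullet> b\<bar> \<le> 2 * r" using dd by linarith
      then show "((real_of_int j * r) *\<^sub>R x - R) \<bullet> b \<le> z \<bullet> b"
        "z \<bullet> b \<le> ((real_of_int j * r) *\<^sub>R x + R) \<bullet> b"
        using RB[OF b] by (auto simp: inner_diff_left inner_add_left)
    qed
    then show "z \<in> (\<Union>j\<in>J. B j)" using jJ by blast
  qed
  have mB: "emeasure lborel (B j) = ennreal ((4 * r) ^ DIM('a))" for j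
    unfolding B_def emeasure_lborel_cbox_eq using r
    by (simp add: RB inner_diff_left inner_add_left power_mult_distrib)
  have Bs: "B j \<in> sets lborel" for j
    by (simp add: B_def borel_closed)
  have cJ: "real (card J) \<le> 2 / r + 3"
  proof -
    have "card J = 2 * N + 1" unfolding J_def by simp
    moreover have "real N \<le> 1 / r + 1"
    proof -
      have "0 < 1/r" using r by simp
      then have "-1 < 1/r" by linarith
      then have c0: "0 \<le> \<lceil>1/r\<rceil>" by (simp only: zero_le_ceiling)
      have "real N = real_of_int \<lceil>1/r\<rceil>" unfolding N_def using c0 by simp
      also have "\<dots> \<le> 1 / r + 1" using ceiling_correct[of "1/r"] by linarith
      finally show ?thesis .
    qed
    ultimately show ?thesis by simp
  qed
  have "emeasure lborel {z. norm z < 1 \<and> norm (z - (z \<bullet> x) *\<^sub>R x) < r} \<le> emeasure lborel (\<Union>j\<in>J. B j)"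
    by (rule emeasure_mono[OF sub]) (rule sets.finite_UN, simp add: J_def, rule Bs)
  also have "\<dots> \<le> (\<Sum>j\<in>J. emeasure lborel (B j))"
    by (rule emeasure_subadditive_finite) (simp add: J_def, use Bs in blast)
  also have "\<dots> = (\<Sum>j\<in>J. ennreal ((4 * r) ^ DIM('a)))"
    by (simp only: mB)
  also have "\<dots> = of_nat (card J) * ennreal ((4 * r) ^ DIM('a))"
    by (rule sum_constant)
  also have "\<dots> = ennreal (real (card J) * (4 * r) ^ DIM('a))"
    using r by (simp add: ennreal_of_nat_eq_real_of_nat ennreal_mult)
  also have "\<dots> \<le> ennreal ((2 / r + 3) * (4 * r) ^ DIM('a))"
    using cJ r by (intro ennreal_leI mult_right_mono) auto
  finally show ?thesis .
qed



lemma exp_poly_le: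
  fixes y :: real
  assumes y: "y \<ge> 0" and m: "m > 0"
  shows "y ^ m * exp (- y) \<le> real m ^ m"
proof -
  have "(1 + y / real m) ^ m \<le> exp y"
    using y m by (intro exp_ge_one_plus_x_over_n_power_n) auto
  moreover have "(y / real m) ^ m \<le> (1 + y / real m) ^ m"
    using y m by (intro power_mono) auto
  ultimately have "y ^ m / real m ^ m \<le> exp y" by (simp add: power_divide)
  then have "y ^ m \<le> real m ^ m * exp y" using m by (simp add: field_simps)
  then have "y ^ m * exp (- y) \<le> real m ^ m * exp y * exp (- y)"
    by (intro mult_right_mono) auto
  also have "\<dots> = real m ^ m" by (simp add: mult.assoc exp_minus)
  finally show ?thesis .
qed

lemma summable_exp_poly:
  fixes c \<alpha> :: real
  assumes c: "c > 0" and a: "\<alpha> > 0"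
  shows "summable (\<lambda>j. exp (- (c * real j powr \<alpha>)) * real (Suc j) ^ k)"
proof -
  define m where "m = nat \<lceil>(real k + 2) / \<alpha>\<rceil> + 1"
  have m0: "m > 0" by (simp add: m_def)
  have "(real k + 2) / \<alpha> \<le> real m"
    unfolding m_def by linarith
  then have mk: "real k + 2 \<le> real m * \<alpha>" using a by (simp add: field_simps)
  define K where "K = real m ^ m / c ^ m * 2 ^ k"
  show ?thesis
  proof (rule summable_comparison_test')
    show "summable (\<lambda>j. K * real j powr (- 2))"
      by (intro summable_mult) (simp add: summable_real_powr_iff)
    fix j :: nat assume "j \<ge> 1"
    then have j1: "real j \<ge> 1" by simp
    define y where "y = c * real j powr \<alpha>"
    have ypos: "y > 0" using c j1 by (simp add: y_def)
    have e1: "y ^ m * exp (- y) \<le> real m ^ m" using exp_poly_le[of y m] ypos m0 by simp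
    have ym: "y ^ m = c ^ m * real j powr (real m * \<alpha>)"
      using j1 by (simp add: y_def power_mult_distrib powr_power)
    have e2: "exp (- y) \<le> real m ^ m / (c ^ m * real j powr (real m * \<alpha>))"
      using e1 ym ypos c j1 by (simp add: field_simps)
    have p1: "real (Suc j) ^ k \<le> 2 ^ k * real j powr real k"
    proof -
      have "real (Suc j) ^ k \<le> (2 * real j) ^ k" using j1 by (intro power_mono) auto
      also have "\<dots> = 2 ^ k * real j powr real k" using j1 by (simp add: power_mult_distrib powr_realpow)
      finally show ?thesis .
    qed
    have "exp (- y) * real (Suc j) ^ k \<le>
        real m ^ m / (c ^ m * real j powr (real m * \<alpha>)) * (2 ^ k * real j powr real k)"
      using e2 p1 c by (intro mult_mono) auto
    also have "\<dots> = K * (real j powr real k / real j powr (real m * \<alpha>))"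
      by (simp add: K_def field_simps)
    also have "\<dots> = K * real j powr (real k - real m * \<alpha>)"
      by (simp add: powr_diff)
    also have "\<dots> \<le> K * real j powr (- 2)"
      using mk j1 c by (intro mult_left_mono powr_mono) (auto simp: K_def)
    finally show "norm (exp (- (c * real j powr \<alpha>)) * real (Suc j) ^ k) \<le> K * real j powr (- 2)"
      by (simp add: y_def)
  qed
qed



lemma cyl_sets:
  fixes x :: "'a::euclidean_space"
  shows "{z. norm z < 1 \<and> norm (z - (z \<bullet> x) *\<^sub>R x) < r} \<in> sets lborel"
proof -
  have "open {z::'a. norm z < 1 \<and> norm (z - (z \<bullet> x) *\<^sub>R x) < r}"
    by (intro open_Collect_conj open_Collect_less continuous_intros)
  then show ?thesis by (simp add: borel_open)
qed

definition aseq :: "real \<Rightarrow> real \<Rightarrow> nat \<Rightarrow> nat \<Rightarrow> real" where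
  "aseq c \<alpha> d j = exp (- (c * real j powr \<alpha>)) * real (Suc j) ^ d * (3 * real j + 5)"

lemma aseq_summable:
  assumes "c > 0" "\<alpha> > 0"
  shows "summable (aseq c \<alpha> d)"
proof (rule summable_comparison_test')
  show "summable (\<lambda>j. 5 * (exp (- (c * real j powr \<alpha>)) * real (Suc j) ^ Suc d))"
    by (intro summable_mult summable_exp_poly assms)
  fix j :: nat assume "j \<ge> 0"
  have "3 * real j + 5 \<le> 5 * real (Suc j)" by simp
  then have A: "aseq c \<alpha> d j \<le> exp (- (c * real j powr \<alpha>)) * real (Suc j) ^ d * (5 * real (Suc j))"
    unfolding aseq_def by (intro mult_left_mono) auto
  have B: "aseq c \<alpha> d j \<ge> 0" unfolding aseq_def by simp
  have E: "exp (- (c * real j powr \<alpha>)) * real (Suc j) ^ d * (5 * real (Suc j))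
      = 5 * (exp (- (c * real j powr \<alpha>)) * real (Suc j) ^ Suc d)"
    by (simp only: power_Suc mult_ac)
  show "norm (aseq c \<alpha> d j) \<le> 5 * (exp (- (c * real j powr \<alpha>)) * real (Suc j) ^ Suc d)"
    using A B E by (metis abs_of_nonneg real_norm_def)
qed

lemma layer_bound:
  fixes x :: "'a::euclidean_space" and c \<alpha> :: real and q :: nat
  assumes x: "norm x = 1" and c: "c > 0" and a: "\<alpha> > 0" and q: "q \<ge> 1"
  shows "(\<integral>\<^sup>+z. ennreal (exp (- (real q * c) * norm (z - (z \<bullet> x) *\<^sub>R x) powr \<alpha>)) * indicator (ball 0 1) z \<partial>lborel)
    \<le> ennreal (4 ^ DIM('a) * (\<Sum>j. aseq c \<alpha> (DIM('a) - 1) j) * (real q powr (- 1 / \<alpha>)) ^ (DIM('a) - 1))"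
proof -
  define n where "n = DIM('a)"
  define d where "d = n - 1"
  have nd: "n = Suc d" unfolding d_def n_def using DIM_positive[where 'a='a] by simp
  define h where "h = real q powr (- 1 / \<alpha>)"
  have q1: "real q \<ge> 1" using q by simp
  have h0: "h > 0" using q1 by (simp add: h_def)
  have h1: "h \<le> 1"
  proof -
    have "h \<le> real q powr 0" unfolding h_def using q1 a by (intro powr_mono) auto
    then show ?thesis using q1 by simp
  qed
  have ha: "h powr \<alpha> = 1 / real q"
  proof -
    have "h powr \<alpha> = real q powr (- 1 / \<alpha> * \<alpha>)" unfolding h_def by (rule powr_powr)
    also have "- 1 / \<alpha> * \<alpha> = - 1" using a by simp
    also have "real q powr (- 1) = inverse (real q powr 1)" by (rule powr_minus)
    finally show ?thesis using q1 by (simp add: divide_inverse)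
  qed
  define S where "S j = {z::'a. norm z < 1 \<and> norm (z - (z \<bullet> x) *\<^sub>R x) < real (Suc j) * h}" for j
  define e where "e j = exp (- (c * real j powr \<alpha>))" for j
  have Ss: "S j \<in> sets lborel" for j unfolding S_def by (rule cyl_sets)
  have pw: "ennreal (exp (- (real q * c) * norm (z - (z \<bullet> x) *\<^sub>R x) powr \<alpha>)) * indicator (ball 0 1) z
      \<le> (\<Sum>j. ennreal (e j) * indicator (S j) z)" for z
  proof (cases "z \<in> ball 0 1")
    case False then show ?thesis by simp
  next
    case True
    define u where "u = norm (z - (z \<bullet> x) *\<^sub>R x)"
    have u0: "u \<ge> 0" by (simp add: u_def)
    define j0 where "j0 = nat \<lfloor>u / h\<rfloor>"
    have fl0: "0 \<le> \<lfloor>u / h\<rfloor>" using u0 h0 by simp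
    have j0a: "real j0 \<le> u / h" unfolding j0_def using fl0 by simp
    have j0b: "u / h < real j0 + 1" unfolding j0_def using fl0 by linarith
    have "u < real (Suc j0) * h" using j0b h0 by (simp add: field_simps)
    then have zS: "z \<in> S j0" using True by (simp add: S_def u_def)
    have "real j0 powr \<alpha> \<le> (u / h) powr \<alpha>" using j0a a by (intro powr_mono2) auto
    also have "\<dots> = real q * u powr \<alpha>" using u0 h0 ha by (simp add: powr_divide)
    finally have "c * real j0 powr \<alpha> \<le> real q * c * u powr \<alpha>" using c
      by (simp add: mult_left_mono mult.assoc mult.left_commute)
    then have "exp (- (real q * c) * u powr \<alpha>) \<le> e j0" unfolding e_def by simp
    then have "ennreal (exp (- (real q * c) * u powr \<alpha>)) * indicator (ball 0 1) z
        \<le> ennreal (e j0) * indicator (S j0) z" using True zS by (simp add: ennreal_leI)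
    also have "\<dots> = (\<Sum>j\<in>{j0}. ennreal (e j) * indicator (S j) z)"
    proof -
      have "(\<Sum>j\<in>{j0}. F j) = F j0" for F :: "nat \<Rightarrow> ennreal" by simp
      then show ?thesis by metis
    qed
    also have "\<dots> \<le> (\<Sum>j. ennreal (e j) * indicator (S j) z)"
      by (rule sum_le_suminf[OF summableI]) auto
    finally show ?thesis by (simp add: u_def)
  qed
  have "(\<integral>\<^sup>+z. ennreal (exp (- (real q * c) * norm (z - (z \<bullet> x) *\<^sub>R x) powr \<alpha>)) * indicator (ball 0 1) z \<partial>lborel)
      \<le> (\<integral>\<^sup>+z. (\<Sum>j. ennreal (e j) * indicator (S j) z) \<partial>lborel)"
    by (rule nn_integral_mono) (rule pw)
  also have "\<dots> = (\<Sum>j. \<integral>\<^sup>+z. ennreal (e j) * indicator (S j) z \<partial>lborel)"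
    by (rule nn_integral_suminf) (use Ss in measurable)
  also have "\<dots> = (\<Sum>j. ennreal (e j) * emeasure lborel (S j))"
    using Ss by (simp add: nn_integral_cmult_indicator)
  also have "\<dots> \<le> (\<Sum>j. ennreal (4 ^ n * h ^ d * aseq c \<alpha> d j))"
  proof (rule suminf_le[OF _ summableI summableI])
    fix j
    define r where "r = real (Suc j) * h"
    have r0: "r > 0" using h0 by (simp add: r_def)
    have "emeasure lborel (S j) \<le> ennreal ((2 / r + 3) * (4 * r) ^ n)"
      unfolding S_def r_def[symmetric] n_def using cyl_bound[OF x r0] by simp
    then have "ennreal (e j) * emeasure lborel (S j) \<le> ennreal (e j) * ennreal ((2 / r + 3) * (4 * r) ^ n)"
      by (rule mult_left_mono) simp
    also have "\<dots> = ennreal (e j * ((2 / r + 3) * (4 * r) ^ n))"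
      by (simp add: ennreal_mult e_def r0 less_imp_le)
    also have "\<dots> \<le> ennreal (4 ^ n * h ^ d * aseq c \<alpha> d j)"
    proof (rule ennreal_leI)
      have "(2 / r + 3) * (4 * r) ^ n = 4 ^ n * r ^ d * (2 + 3 * r)"
        using r0 by (simp add: nd power_mult_distrib field_simps)
      also have "\<dots> = 4 ^ n * h ^ d * (real (Suc j) ^ d * (2 + 3 * r))"
        by (simp add: r_def power_mult_distrib mult_ac)
      also have "\<dots> \<le> 4 ^ n * h ^ d * (real (Suc j) ^ d * (3 * real j + 5))"
      proof -
        have "r \<le> real (Suc j)" unfolding r_def using h1 by (intro mult_left_le) auto
        then have "2 + 3 * r \<le> 3 * real j + 5" by simp
        then show ?thesis using h0 by (intro mult_left_mono) auto
      qed
      finally have "(2 / r + 3) * (4 * r) ^ n \<le> 4 ^ n * h ^ d * (real (Suc j) ^ d * (3 * real j + 5))" .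
      then have "e j * ((2 / r + 3) * (4 * r) ^ n) \<le> e j * (4 ^ n * h ^ d * (real (Suc j) ^ d * (3 * real j + 5)))"
        by (rule mult_left_mono) (simp add: e_def)
      then show "e j * ((2 / r + 3) * (4 * r) ^ n) \<le> 4 ^ n * h ^ d * aseq c \<alpha> d j"
        by (simp add: aseq_def e_def mult_ac)
    qed
    finally show "ennreal (e j) * emeasure lborel (S j) \<le> ennreal (4 ^ n * h ^ d * aseq c \<alpha> d j)" .
  qed
  also have "\<dots> = ennreal (4 ^ n * h ^ d * (\<Sum>j. aseq c \<alpha> d j))"
  proof (rule suminf_ennreal_eq)
    show "0 \<le> 4 ^ n * h ^ d * aseq c \<alpha> d j" for j using h0 by (simp add: aseq_def)
    show "(\<lambda>j. 4 ^ n * h ^ d * aseq c \<alpha> d j) sums (4 ^ n * h ^ d * (\<Sum>j. aseq c \<alpha> d j))"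
      by (intro sums_mult summable_sums aseq_summable c a)
  qed
  finally show ?thesis by (simp add: n_def d_def h_def mult_ac)
qed



lemma kappa_bound:
  fixes \<kappa> :: "real \<Rightarrow> real" and C1 \<alpha> \<epsilon> :: real
  assumes cont: "continuous_on {-1..1} \<kappa>"
    and k1: "\<kappa> 1 = 1"
    and pos: "C1 > 0" "\<alpha> > 0" "\<epsilon> > 0"
    and lt1: "\<forall>t\<in>{-1..1}. t \<noteq> 1 \<longrightarrow> \<bar>\<kappa> t\<bar> < 1"
    and hoelder: "\<forall>\<theta>. \<bar>\<theta>\<bar> \<le> \<epsilon> \<longrightarrow> 1 - \<kappa> (cos \<theta>) \<ge> C1 * \<bar>\<theta>\<bar> powr \<alpha>"
  obtains \<rho> where "0 < \<rho>" "\<rho> < 1"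
    "\<And>t q. t \<in> {-1..1} \<Longrightarrow> \<bar>\<kappa> t\<bar> ^ q \<le> \<rho> ^ q + exp (- (real q * C1) * sqrt (1 - t\<^sup>2) powr \<alpha>)"
proof -
  have "\<exists>d>0. \<forall>t\<in>{-1..1}. dist t 1 < d \<longrightarrow> dist (\<kappa> t) (\<kappa> 1) < 1/2"
    using continuous_on_iff[THEN iffD1, OF cont, rule_format, of 1 "1/2"] by simp
  then obtain \<delta> where d0: "\<delta> > 0" and dk: "\<And>t. t \<in> {-1..1} \<Longrightarrow> dist t 1 < \<delta> \<Longrightarrow> dist (\<kappa> t) (\<kappa> 1) < 1/2"
    by blast
  define \<epsilon>0 where "\<epsilon>0 = min \<epsilon> 1"
  have e0: "0 < \<epsilon>0" "\<epsilon>0 \<le> \<epsilon>" "\<epsilon>0 \<le> 1" using pos by (auto simp: \<epsilon>0_def)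
  have pi3: "3 < pi" by (rule pi_gt3)
  have ce0: "cos \<epsilon>0 < 1"
    using cos_monotone_0_pi[of 0 \<epsilon>0] e0 pi3 by simp
  have ce1: "0 < cos \<epsilon>0" using e0 pi3 by (intro cos_gt_zero) auto
  define t0 where "t0 = max (1 - \<delta>/2) (cos \<epsilon>0)"
  have t01: "t0 < 1" using d0 ce0 by (simp add: t0_def)
  have t0m: "-1 \<le> t0" using ce1 by (simp add: t0_def)
  have "continuous_on {-1..t0} (\<lambda>t. \<bar>\<kappa> t\<bar>)"
    using t01 by (intro continuous_on_rabs continuous_on_subset[OF cont]) auto
  then obtain t1 where t1: "t1 \<in> {-1..t0}" and t1m: "\<And>t. t \<in> {-1..t0} \<Longrightarrow> \<bar>\<kappa> t\<bar> \<le> \<bar>\<kappa> t1\<bar>"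
    using continuous_attains_sup[of "{-1..t0}" "\<lambda>t. \<bar>\<kappa> t\<bar>"] t0m by auto
  have r1: "\<bar>\<kappa> t1\<bar> < 1" using lt1 t1 t01 by auto
  define \<rho> where "\<rho> = max \<bar>\<kappa> t1\<bar> (1/2)"
  have \<rho>: "0 < \<rho>" "\<rho> < 1" using r1 by (auto simp: \<rho>_def)
  show ?thesis
  proof (rule that[OF \<rho>])
    fix t :: real and q :: nat
    assume t: "t \<in> {-1..1}"
    show "\<bar>\<kappa> t\<bar> ^ q \<le> \<rho> ^ q + exp (- (real q * C1) * sqrt (1 - t\<^sup>2) powr \<alpha>)"
    proof (cases "t \<le> t0")
      case True
      then have "\<bar>\<kappa> t\<bar> \<le> \<rho>" using t1m[of t] t by (auto simp: \<rho>_def)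
      then have "\<bar>\<kappa> t\<bar> ^ q \<le> \<rho> ^ q" by (intro power_mono) auto
      then show ?thesis by (smt (verit) exp_gt_zero)
    next
      case False
      then have tt: "t0 < t" by simp
      have tm: "-1 \<le> t" "t \<le> 1" using t by auto
      define \<theta> where "\<theta> = arccos t"
      have th: "0 \<le> \<theta>" "\<theta> \<le> pi" "cos \<theta> = t" using tm by (auto simp: \<theta>_def arccos_bounded)
      have the: "\<theta> \<le> \<epsilon>0"
      proof (rule ccontr)
        assume "\<not> \<theta> \<le> \<epsilon>0"
        then have "cos \<theta> < cos \<epsilon>0" using cos_monotone_0_pi[of \<epsilon>0 \<theta>] e0 th by auto
        then show False using th tt by (simp add: t0_def)
      qed
      have ho: "1 - \<kappa> t \<ge> C1 * \<theta> powr \<alpha>"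
        using hoelder[rule_format, of \<theta>] th the e0 by auto
      have "dist t 1 < \<delta>" using tt tm d0 by (simp add: t0_def dist_real_def)
      then have "dist (\<kappa> t) 1 < 1/2" using dk[OF t] k1 by simp
      then have kp: "\<kappa> t > 0" unfolding dist_real_def by arith
      define s where "s = sqrt (1 - t\<^sup>2)"
      have s: "s = sin \<theta>" unfolding s_def \<theta>_def using tm by (simp add: sin_arccos)
      have "t\<^sup>2 \<le> 1" using tm by (simp add: abs_square_le_1)
      then have s0: "0 \<le> s" unfolding s_def by simp
      have "s \<le> \<theta>" unfolding s using th by (simp add: sin_x_le_x)
      then have "s powr \<alpha> \<le> \<theta> powr \<alpha>" using s0 pos by (intro powr_mono2) auto
      then have "\<kappa> t \<le> 1 - C1 * s powr \<alpha>" using ho pos by (smt (verit) mult_left_mono)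
      also have "\<dots> \<le> exp (- (C1 * s powr \<alpha>))" using exp_ge_add_one_self[of "- (C1 * s powr \<alpha>)"] by simp
      finally have "\<bar>\<kappa> t\<bar> \<le> exp (- (C1 * s powr \<alpha>))" using kp by simp
      then have "\<bar>\<kappa> t\<bar> ^ q \<le> exp (- (C1 * s powr \<alpha>)) ^ q" by (intro power_mono) auto
      also have "\<dots> = exp (- (real q * C1) * s powr \<alpha>)"
        by (simp add: exp_of_nat_mult[symmetric])
      finally have "\<bar>\<kappa> t\<bar> ^ q \<le> exp (- (real q * C1) * s powr \<alpha>)" .
      moreover have "0 \<le> \<rho> ^ q" using \<rho> by simp
      ultimately show ?thesis by (simp add: s_def)
    qed
  qed
qed

lemma Pz_bound:
  fixes x z :: "'a::euclidean_space"
  assumes x: "norm x = 1" and z0: "z \<noteq> 0" and z1: "norm z \<le> 1"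
  shows "norm (z - (z \<bullet> x) *\<^sub>R x) \<le> sqrt (1 - (x \<bullet> (z /\<^sub>R norm z))\<^sup>2)"
proof -
  define b where "b = (norm z)\<^sup>2"
  define a where "a = (z \<bullet> x)\<^sup>2"
  have xx: "x \<bullet> x = 1" using x by (simp add: dot_square_norm)
  have P: "(norm (z - (z \<bullet> x) *\<^sub>R x))\<^sup>2 = b - a"
    unfolding b_def a_def power2_norm_eq_inner
    by (simp add: inner_diff_left inner_diff_right xx inner_commute power2_eq_square algebra_simps)
  have ab: "a \<le> b"
  proof -
    have "\<bar>z \<bullet> x\<bar> \<le> norm z * norm x" by (rule Cauchy_Schwarz_ineq2)
    then have "\<bar>z \<bullet> x\<bar> \<le> norm z" using x by simp
    then have "\<bar>z \<bullet> x\<bar>\<^sup>2 \<le> (norm z)\<^sup>2" by (intro power_mono) auto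
    then show ?thesis by (simp add: a_def b_def)
  qed
  have b0: "0 < b" using z0 by (simp add: b_def)
  have b1: "b \<le> 1" using z1 by (simp add: b_def power_le_one)
  have "x \<bullet> (z /\<^sub>R norm z) = (z \<bullet> x) / norm z"
    by (simp add: inner_commute divide_inverse mult.commute)
  then have q: "(x \<bullet> (z /\<^sub>R norm z))\<^sup>2 = a / b"
    by (simp add: a_def b_def power_divide)
  have "b - a \<le> 1 - a / b"
  proof -
    have "(b - a) * b \<le> (b - a) * 1" using ab b1 by (intro mult_left_mono) auto
    then have "b - a \<le> (b - a) / b" using b0 by (simp add: field_simps)
    also have "\<dots> = 1 - a / b" using b0 by (simp add: field_simps)
    finally show ?thesis .
  qed
  then have "sqrt ((norm (z - (z \<bullet> x) *\<^sub>R x))\<^sup>2) \<le> sqrt (1 - (x \<bullet> (z /\<^sub>R norm z))\<^sup>2)"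
    unfolding P q by (rule real_sqrt_le_mono)
  then show ?thesis by simp
qed

lemma cube_ball:
  "emeasure lborel (cbox (- One) (One::'a::euclidean_space)) = ennreal (2 ^ DIM('a))"
  "ball (0::'a) 1 \<subseteq> cbox (- One) One"
proof -
  show "emeasure lborel (cbox (- One) (One::'a::euclidean_space)) = ennreal (2 ^ DIM('a))"
  proof -
    have "(\<Prod>b\<in>(Basis::'a set). (One - (- One)) \<bullet> b) = (\<Prod>b\<in>(Basis::'a set). 2)"
      by (rule prod.cong) (auto simp: inner_diff_left inner_add_left)
    then show ?thesis by (simp add: emeasure_lborel_cbox_eq)
  qed
  show "ball (0::'a) 1 \<subseteq> cbox (- One) One"
  proof
    fix z :: 'a assume "z \<in> ball 0 1"
    then have z: "norm z < 1" by simp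
    show "z \<in> cbox (- One) One" unfolding mem_box
    proof (intro ballI)
      fix b :: 'a assume b: "b \<in> Basis"
      have "\<bar>z \<bullet> b\<bar> \<le> norm z" using b by (rule Basis_le_norm)
      then show "- One \<bullet> b \<le> z \<bullet> b \<and> z \<bullet> b \<le> One \<bullet> b" using z b by auto
    qed
  qed
qed

lemma space_sphere_measure: "space (sphere_measure TYPE('n::finite)) = sphere (0::real^'n) 1"
  by (simp add: sphere_measure_def sphere_space_def space_restrict_space space_scale_measure)

lemma sphere_total:
  "emeasure (sphere_measure TYPE('n::finite)) (space (sphere_measure TYPE('n)))
     \<le> ennreal (real CARD('n) * 2 ^ CARD('n))"
proof -
  have "emeasure (sphere_measure TYPE('n)) (space (sphere_measure TYPE('n)))
      = (\<integral>\<^sup>+y. 1 \<partial>sphere_measure TYPE('n))" by simp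
  also have "\<dots> = ennreal (real CARD('n)) * (\<integral>\<^sup>+z. indicator (ball (0::real^'n) 1 - {0}) z \<partial>lborel)"
    by (subst sphere_nn) auto
  also have "(\<integral>\<^sup>+z. indicator (ball (0::real^'n) 1 - {0}) z \<partial>lborel) = emeasure lborel (ball (0::real^'n) 1 - {0})"
    by (rule nn_integral_indicator) (simp add: borel_open open_Diff)
  also have "\<dots> \<le> emeasure lborel (cbox (- One) (One::real^'n))"
    using cube_ball(2) by (intro emeasure_mono) auto
  also have "\<dots> = ennreal (2 ^ CARD('n))" using cube_ball(1)[where 'a="real^'n"] by simp
  finally show ?thesis by (simp add: ennreal_mult mult_left_mono)
qed

lemma inner_bound:
  fixes x :: "real^'n::finite" and \<kappa> :: "real \<Rightarrow> real" and C1 \<alpha> \<rho> :: real and q :: nat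
  assumes x: "x \<in> sphere 0 1" and C1: "C1 > 0" and a: "\<alpha> > 0" and q: "q \<ge> 1" and \<rho>: "\<rho> \<ge> 0"
    and kb: "\<And>t. t \<in> {-1..1} \<Longrightarrow> \<bar>\<kappa> t\<bar> ^ q \<le> \<rho> ^ q + exp (- (real q * C1) * sqrt (1 - t\<^sup>2) powr \<alpha>)"
  shows "(\<integral>\<^sup>+y. ennreal (\<bar>\<kappa> (x \<bullet> y)\<bar> ^ q) \<partial>sphere_measure TYPE('n))
    \<le> ennreal (real CARD('n) * (\<rho> ^ q * 2 ^ CARD('n) + 4 ^ CARD('n) * (\<Sum>j. aseq C1 \<alpha> (CARD('n) - 1) j)
          * (real q powr (- 1 / \<alpha>)) ^ (CARD('n) - 1)))"
proof -
  define E where "E y = exp (- (real q * C1) * sqrt (1 - (x \<bullet> y)\<^sup>2) powr \<alpha>)" for y :: "real^'n"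
  define F where "F z = exp (- (real q * C1) * norm (z - (z \<bullet> x) *\<^sub>R x) powr \<alpha>)" for z :: "real^'n"
  define L where "L = 4 ^ CARD('n) * (\<Sum>j. aseq C1 \<alpha> (CARD('n) - 1) j) * (real q powr (- 1 / \<alpha>)) ^ (CARD('n) - 1)"
  have xn: "norm x = 1" using x by simp
  have "(\<integral>\<^sup>+y. ennreal (\<bar>\<kappa> (x \<bullet> y)\<bar> ^ q) \<partial>sphere_measure TYPE('n))
      \<le> (\<integral>\<^sup>+y. ennreal (\<rho> ^ q) + ennreal (E y) \<partial>sphere_measure TYPE('n))"
  proof (rule nn_integral_mono)
    fix y assume "y \<in> space (sphere_measure TYPE('n))"
    then have y: "norm y = 1" by (simp add: space_sphere_measure)
    have "\<bar>x \<bullet> y\<bar> \<le> norm x * norm y" by (rule Cauchy_Schwarz_ineq2)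
    then have "x \<bullet> y \<in> {-1..1}" using xn y by auto
    then have "\<bar>\<kappa> (x \<bullet> y)\<bar> ^ q \<le> \<rho> ^ q + E y" using kb by (simp add: E_def)
    then show "ennreal (\<bar>\<kappa> (x \<bullet> y)\<bar> ^ q) \<le> ennreal (\<rho> ^ q) + ennreal (E y)"
      using \<rho> by (simp add: E_def flip: ennreal_plus)
  qed
  also have "\<dots> = ennreal (real CARD('n)) *
      (\<integral>\<^sup>+z. (ennreal (\<rho> ^ q) + ennreal (E (z /\<^sub>R norm z))) * indicator (ball 0 1 - {0}) z \<partial>lborel)"
    by (rule sphere_nn) (unfold E_def, measurable)
  also have "(\<integral>\<^sup>+z. (ennreal (\<rho> ^ q) + ennreal (E (z /\<^sub>R norm z))) * indicator (ball 0 1 - {0}) z \<partial>lborel)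
      \<le> (\<integral>\<^sup>+z. ennreal (\<rho> ^ q) * indicator (cbox (- One) One) z + ennreal (F z) * indicator (ball 0 1) z \<partial>lborel)"
  proof (rule nn_integral_mono)
    fix z :: "real^'n"
    show "(ennreal (\<rho> ^ q) + ennreal (E (z /\<^sub>R norm z))) * indicator (ball 0 1 - {0}) z
        \<le> ennreal (\<rho> ^ q) * indicator (cbox (- One) One) z + ennreal (F z) * indicator (ball 0 1) z"
    proof (cases "z \<in> ball 0 1 - {0}")
      case False then show ?thesis by simp
    next
      case True
      then have zc: "z \<in> cbox (- One) One" "z \<in> ball 0 1" using cube_ball(2) by auto
      have P: "norm (z - (z \<bullet> x) *\<^sub>R x) \<le> sqrt (1 - (x \<bullet> (z /\<^sub>R norm z))\<^sup>2)"
        using True xn by (intro Pz_bound) auto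
      then have "norm (z - (z \<bullet> x) *\<^sub>R x) powr \<alpha> \<le> sqrt (1 - (x \<bullet> (z /\<^sub>R norm z))\<^sup>2) powr \<alpha>"
        using a by (intro powr_mono2) auto
      then have "E (z /\<^sub>R norm z) \<le> F z" unfolding E_def F_def using C1 q
        by (simp add: mult_left_mono)
      then show ?thesis using True zc by (simp add: ennreal_leI)
    qed
  qed
  also have "\<dots> = ennreal (\<rho> ^ q) * emeasure lborel (cbox (- One) (One::real^'n))
      + (\<integral>\<^sup>+z. ennreal (F z) * indicator (ball 0 1) z \<partial>lborel)"
  proof -
    have cm: "cbox (- One) (One::real^'n) \<in> sets lborel" by (simp add: borel_closed)
    have m1: "(\<lambda>z. ennreal (\<rho> ^ q) * indicator (cbox (- One) (One::real^'n)) z) \<in> borel_measurable lborel"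
      using cm by measurable
    have m2: "(\<lambda>z. ennreal (F z) * indicator (ball (0::real^'n) 1) z) \<in> borel_measurable lborel"
      using borel_open[OF open_ball, of "0::real^'n" 1] unfolding F_def by measurable
    show ?thesis
      by (subst nn_integral_add[OF m1 m2]) (simp add: nn_integral_cmult_indicator[OF cm])
  qed
  also have "\<dots> \<le> ennreal (\<rho> ^ q) * ennreal (2 ^ CARD('n)) + ennreal L"
  proof (rule add_mono)
    show "ennreal (\<rho> ^ q) * emeasure lborel (cbox (- One) (One::real^'n)) \<le> ennreal (\<rho> ^ q) * ennreal (2 ^ CARD('n))"
      using cube_ball(1)[where 'a="real^'n"] by simp
    show "(\<integral>\<^sup>+z. ennreal (F z) * indicator (ball 0 1) z \<partial>lborel) \<le> ennreal L"
      using layer_bound[OF xn C1 a q] by (simp add: F_def L_def)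
  qed
  finally have "(\<integral>\<^sup>+y. ennreal (\<bar>\<kappa> (x \<bullet> y)\<bar> ^ q) \<partial>sphere_measure TYPE('n))
      \<le> ennreal (real CARD('n)) * (ennreal (\<rho> ^ q) * ennreal (2 ^ CARD('n)) + ennreal L)"
    by (simp add: mult_left_mono)
  also have "\<dots> = ennreal (real CARD('n) * (\<rho> ^ q * 2 ^ CARD('n) + L))"
  proof -
    have L0: "L \<ge> 0" unfolding L_def
      by (intro mult_nonneg_nonneg suminf_nonneg aseq_summable C1 a) (auto simp: aseq_def)
    show ?thesis using \<rho> L0 by (simp add: ennreal_mult ennreal_plus)
  qed
  finally show ?thesis by (simp add: L_def)
qed

lemma rho_poly:
  fixes \<rho> :: real
  assumes "0 < \<rho>" "\<rho> < 1"
  obtains B where "\<And>q. real q ^ p * \<rho> ^ q \<le> B"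
proof (cases "p = 0")
  case True
  then show ?thesis using assms by (intro that[of 1]) (simp add: power_le_one)
next
  case False
  define l where "l = - ln \<rho>"
  have l0: "l > 0" using assms by (simp add: l_def)
  have "real q ^ p * \<rho> ^ q \<le> real p ^ p / l ^ p" for q
  proof -
    have "\<rho> ^ q = exp (ln \<rho>) ^ q" using assms by simp
    also have "\<dots> = exp (real q * ln \<rho>)" by (simp add: exp_of_nat_mult)
    finally have r: "\<rho> ^ q = exp (- (l * real q))" by (simp add: l_def mult.commute)
    have "(l * real q) ^ p * exp (- (l * real q)) \<le> real p ^ p"
      using False l0 by (intro exp_poly_le) auto
    then have "l ^ p * (real q ^ p * \<rho> ^ q) \<le> real p ^ p"
      by (simp add: r power_mult_distrib mult_ac)
    then show ?thesis using l0 by (simp add: field_simps)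
  qed
  then show ?thesis by (rule that)
qed

lemma int_bound_aux:
  fixes M :: "'a measure" and g :: "'a \<Rightarrow> real"
  assumes "(\<integral>\<^sup>+y. ennreal (norm (g y)) \<partial>M) \<le> ennreal B" "B \<ge> 0"
  shows "norm (integral\<^sup>L M g) \<le> B"
proof (cases "integrable M g")
  case True
  have "ennreal (norm (integral\<^sup>L M g)) \<le> (\<integral>\<^sup>+y. ennreal (norm (g y)) \<partial>M)"
    using integral_norm_bound_ennreal[OF True] .
  also have "\<dots> \<le> ennreal B" by (rule assms)
  finally show ?thesis using assms(2) by (simp add: ennreal_le_iff)
next
  case False then show ?thesis using assms by (simp add: not_integrable_integral_eq)
qed

theorem mainTheorem6:
  fixes M :: "'w measure"
    and B :: "real^'n::finite \<Rightarrow> 'w \<Rightarrow> real"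
    and \<kappa> :: "real \<Rightarrow> real"
    and f :: "real \<Rightarrow> real"
    and C1 \<alpha> \<epsilon> :: real
    and p :: nat
  assumes dim: "CARD('n) \<ge> 2"
    and field: "gaussian_field M B \<kappa>"
    and iso: "isotropic_field M B"
    and cont: "continuous_on {-1..1} \<kappa>"
    and k1: "\<kappa> 1 = 1"
    and pos: "C1 > 0" "\<alpha> > 0" "\<epsilon> > 0"
    and lt1: "\<forall>t\<in>{-1..1}. t \<noteq> 1 \<longrightarrow> \<bar>\<kappa> t\<bar> < 1"
    and hoelder: "\<forall>\<theta>. \<bar>\<theta>\<bar> \<le> \<epsilon> \<longrightarrow> 1 - \<kappa> (cos \<theta>) \<ge> C1 * \<bar>\<theta>\<bar> powr \<alpha>"
    and fL2: "L2_gauss f"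
    and pd: "real p \<le> real (CARD('n) - 1) / \<alpha>"
  shows "in_D_p2 (sphere_measure TYPE('n)) \<kappa> f p"
proof -
  obtain \<rho> where \<rho>: "0 < \<rho>" "\<rho> < 1"
    and kb: "\<And>t q. t \<in> {-1..1} \<Longrightarrow> \<bar>\<kappa> t\<bar> ^ q \<le> \<rho> ^ q + exp (- (real q * C1) * sqrt (1 - t\<^sup>2) powr \<alpha>)"
    using kappa_bound[OF cont k1 pos lt1 hoelder] by blast
  obtain B\<rho> where B\<rho>: "\<And>q. real q ^ p * \<rho> ^ q \<le> B\<rho>"
    using rho_poly[OF \<rho>] by blast
  define n where "n = CARD('n)"
  define d where "d = n - 1"
  define T where "T = (\<Sum>j. aseq C1 \<alpha> d j)"
  define V where "V = real n * 2 ^ n"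
  define \<mu> where "\<mu> = sphere_measure TYPE('n)"
  define I where "I q = (LINT x|\<mu>. LINT y|\<mu>. (\<kappa> (x \<bullet> y)) ^ q)" for q
  define h where "h q = real q powr (- 1 / \<alpha>)" for q :: nat
  define Bq where "Bq q = real n * (\<rho> ^ q * 2 ^ n + 4 ^ n * T * h q ^ d)" for q
  have T0: "T \<ge> 0" unfolding T_def
    by (intro suminf_nonneg aseq_summable pos) (auto simp: aseq_def)
  have Bq0: "Bq q \<ge> 0" for q unfolding Bq_def h_def using T0 \<rho> by simp
  have V0: "V \<ge> 0" unfolding V_def by simp
  have inner: "norm (LINT y|\<mu>. (\<kappa> (x \<bullet> y)) ^ q) \<le> Bq q" if x: "x \<in> sphere 0 1" and q: "q \<ge> 1" for x q
  proof (rule int_bound_aux[OF _ Bq0])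
    show "(\<integral>\<^sup>+y. ennreal (norm ((\<kappa> (x \<bullet> y)) ^ q)) \<partial>\<mu>) \<le> ennreal (Bq q)"
      using inner_bound[OF x pos(1) pos(2) q less_imp_le[OF \<rho>(1)] kb]
      by (simp add: \<mu>_def Bq_def n_def d_def T_def h_def power_abs)
  qed
  have Ibound: "\<bar>I q\<bar> \<le> Bq q * V" if q: "q \<ge> 1" for q
  proof -
    have "(\<integral>\<^sup>+x. ennreal (norm (LINT y|\<mu>. (\<kappa> (x \<bullet> y)) ^ q)) \<partial>\<mu>) \<le> (\<integral>\<^sup>+x. ennreal (Bq q) \<partial>\<mu>)"
      by (rule nn_integral_mono) (use inner q in \<open>auto simp: \<mu>_def space_sphere_measure intro!: ennreal_leI\<close>)
    also have "\<dots> = ennreal (Bq q) * emeasure \<mu> (space \<mu>)" by simp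
    also have "\<dots> \<le> ennreal (Bq q) * ennreal V"
      using sphere_total by (intro mult_left_mono) (auto simp: \<mu>_def V_def n_def)
    also have "\<dots> = ennreal (Bq q * V)" using Bq0 V0 by (simp add: ennreal_mult)
    finally have "norm (I q) \<le> Bq q * V" unfolding I_def
      by (intro int_bound_aux) (use Bq0 V0 in auto)
    then show ?thesis by simp
  qed
  define K where "K = V * real n * (B\<rho> * 2 ^ n + 4 ^ n * T)"
  have Kb: "real q ^ p * \<bar>I q\<bar> \<le> K" if q: "q \<ge> 1" for q
  proof -
    have q1: "real q \<ge> 1" using q by simp
    have hq: "real q ^ p * h q ^ d \<le> 1"
    proof -
      have "h q ^ d = real q powr (real d * (- 1 / \<alpha>))"
        unfolding h_def using q1 by (simp add: powr_power)
      moreover have "real q ^ p = real q powr real p" using q1 by (simp add: powr_realpow)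
      ultimately have "real q ^ p * h q ^ d = real q powr (real p + real d * (- 1 / \<alpha>))"
        by (simp add: powr_add[symmetric])
      also have "\<dots> \<le> real q powr 0"
      proof (rule powr_mono[OF _ q1])
        have "real p \<le> real d / \<alpha>" using pd by (simp add: d_def n_def)
        then show "real p + real d * (- 1 / \<alpha>) \<le> 0" by simp
      qed
      finally show ?thesis using q1 by simp
    qed
    have "real q ^ p * \<bar>I q\<bar> \<le> real q ^ p * (Bq q * V)"
      using Ibound[OF q] by (intro mult_left_mono) auto
    also have "\<dots> = V * real n * ((real q ^ p * \<rho> ^ q) * 2 ^ n + 4 ^ n * T * (real q ^ p * h q ^ d))"
      by (simp add: Bq_def algebra_simps)
    also have "\<dots> \<le> V * real n * (B\<rho> * 2 ^ n + 4 ^ n * T * 1)"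
      using B\<rho>[of q] hq T0 V0
      by (intro mult_left_mono add_mono mult_right_mono) auto
    finally show ?thesis by (simp add: K_def)
  qed
  have sb: "summable (\<lambda>q. fact q * (hermite_coeff f q)\<^sup>2)" by (rule bessel[OF fL2])
  show ?thesis
    unfolding in_D_p2_def
  proof (rule summable_comparison_test'[where N=1])
    show "summable (\<lambda>q. K * (fact q * (hermite_coeff f q)\<^sup>2))" using sb by (rule summable_mult)
    fix q :: nat assume q: "q \<ge> 1"
    have "norm (real q ^ p * fact q * (hermite_coeff f q)\<^sup>2 * (LINT x|sphere_measure TYPE('n). LINT y|sphere_measure TYPE('n). (\<kappa> (x \<bullet> y)) ^ q))
        = (fact q * (hermite_coeff f q)\<^sup>2) * (real q ^ p * \<bar>I q\<bar>)"
      by (simp add: I_def \<mu>_def abs_mult)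
    also have "\<dots> \<le> (fact q * (hermite_coeff f q)\<^sup>2) * K"
      using Kb[OF q] by (intro mult_left_mono) auto
    finally show "norm (real q ^ p * fact q * (hermite_coeff f q)\<^sup>2 * (LINT x|sphere_measure TYPE('n). LINT y|sphere_measure TYPE('n). (\<kappa> (x \<bullet> y)) ^ q))
        \<le> K * (fact q * (hermite_coeff f q)\<^sup>2)" by (simp add: mult.commute)
  qed
qed


end
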